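(* Let $G$ be an $n$-node graph of maximum degree $\Delta$, and let $K$ be an almost-clique of an $\epsilon$-almost-clique decomposition of $G$ with $\epsilon=10^{-5}$. Let $k\le \Delta/(C\log n)$ be an integer, for some large enough constant $C>0$. Suppose each $v\in K$ independently samples $t(v)\in[k]$ uniformly at random, and let $T_i=\{v\in K: t(v)=i\}$ for $i\in[k]$. Then, with high probability, for every $i\in[k]$ and every $u,w\in K$, $|T_i\cap N(u)\cap N(w)|\ge (C/4)\log n$.
   Context: $N(v)$ denotes the set of neighbors of $v$ in $G$. An $\epsilon$-almost-clique decomposition is a partition of $V$ into $V_{\mathrm{sparse}},K_1,\ldots,K_k$ such that nodes in $V_{\mathrm{sparse}}$ are $\Omega(\epsilon^2\Delta)$-sparse (sparsity $\zeta_v=\frac1\Delta(\binom{\Delta}{2}-m(N(v)))$ with $m(N(v))$ the number of edges inside $N(v)$) and each almost-clique $K_i$ satisfies $|K_i|\le(1+\epsilon)\Delta$, $|N(v)\cap K_i|\ge(1-\epsilon)\Delta$ for all $v\in K_i$, and $|N(v)\cap K_i|\le(1-\epsilon/2)\Delta$ for all $v\notin K_i$. "With high probability" means with probability at least $1-n^{-c}$, where $c>0$ can be made arbitrarily large by choosing the constant $C$ large enough. *)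

theory Defs
  imports "HOL-Probability.Probability"
begin

definition simple_graph :: "'a set \<Rightarrow> ('a \<Rightarrow> 'a \<Rightarrow> bool) \<Rightarrow> bool" where
  "simple_graph V E \<longleftrightarrow> finite V \<and> V \<noteq> {} \<and>
     (\<forall>x y. E x y \<longrightarrow> x \<in> V \<and> y \<in> V) \<and>
     (\<forall>x y. E x y \<longrightarrow> E y x) \<and> (\<forall>x. \<not> E x x)"

definition nbhd :: "'a set \<Rightarrow> ('a \<Rightarrow> 'a \<Rightarrow> bool) \<Rightarrow> 'a \<Rightarrow> 'a set" where
  "nbhd V E v = {u \<in> V. E v u}"

definition max_degree :: "'a set \<Rightarrow> ('a \<Rightarrow> 'a \<Rightarrow> bool) \<Rightarrow> nat" where
  "max_degree V E = Max ((\<lambda>v. card (nbhd V E v)) ` V)"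

definition edges_inside :: "('a \<Rightarrow> 'a \<Rightarrow> bool) \<Rightarrow> 'a set \<Rightarrow> nat" where
  "edges_inside E S = card {e. \<exists>x y. e = {x, y} \<and> x \<in> S \<and> y \<in> S \<and> E x y}"

definition sparsity :: "'a set \<Rightarrow> ('a \<Rightarrow> 'a \<Rightarrow> bool) \<Rightarrow> 'a \<Rightarrow> real" where
  "sparsity V E v = (real (max_degree V E choose 2) - real (edges_inside E (nbhd V E v)))
                     / real (max_degree V E)"

text \<open>epsilon-almost-clique decomposition (V_sparse, set of almost-cliques Ks); the
  constant hidden in Omega(eps^2 Delta) is the parameter kappa > 0.\<close>
definition almost_clique_decomposition ::
  "'a set \<Rightarrow> ('a \<Rightarrow> 'a \<Rightarrow> bool) \<Rightarrow> real \<Rightarrow> real \<Rightarrow> 'a set \<Rightarrow> 'a set set \<Rightarrow> bool" where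
  "almost_clique_decomposition V E \<epsilon> \<kappa> Vs Ks \<longleftrightarrow>
     (let \<Delta> = real (max_degree V E) in
     Vs \<union> \<Union>Ks = V \<and> Vs \<inter> \<Union>Ks = {} \<and> {} \<notin> Ks \<and>
     (\<forall>K1\<in>Ks. \<forall>K2\<in>Ks. K1 \<noteq> K2 \<longrightarrow> K1 \<inter> K2 = {}) \<and>
     (\<forall>v\<in>Vs. sparsity V E v \<ge> \<kappa> * \<epsilon>\<^sup>2 * \<Delta>) \<and>
     (\<forall>K\<in>Ks. real (card K) \<le> (1 + \<epsilon>) * \<Delta> \<and>
        (\<forall>v\<in>K. real (card (nbhd V E v \<inter> K)) \<ge> (1 - \<epsilon>) * \<Delta>) \<and>
        (\<forall>v\<in>V - K. real (card (nbhd V E v \<inter> K)) \<le> (1 - \<epsilon> / 2) * \<Delta>)))"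

end

theory Submission imports Defs begin

lemma bad_count:
  fixes K :: "'a set" and P :: "'a \<Rightarrow> bool" and k i :: nat and a :: real
  assumes finK: "finite K" and k1: "k \<ge> 1" and i: "i \<in> {1..k}"
  shows "real (card {t \<in> PiE K (\<lambda>_. {1..k}). real (card {v\<in>K. t v = i \<and> P v}) < a})
     \<le> 2 powr a * exp (- real (card {v\<in>K. P v}) / (2 * real k)) * real (card (PiE K (\<lambda>_. {1..k::nat})))"
proof -
  have mono: "\<And>x y. x \<le> y \<Longrightarrow> x * (real k ^ card K * 2 powr a) \<le> y * (real k ^ card K * 2 powr a)"
    by (rule mult_right_mono) simp_all
  define \<Omega> where "\<Omega> = PiE K (\<lambda>_. {1..k::nat})"
  define B where "B = {t \<in> \<Omega>. real (card {v\<in>K. t v = i \<and> P v}) < a}"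
  define f where "f v b = (if P v \<and> b = i then 1/2 else (1::real))" for v b
  have finO: "finite \<Omega>" unfolding \<Omega>_def using finK by (simp add: finite_PiE)
  have cO: "real (card \<Omega>) = real k ^ card K"
    unfolding \<Omega>_def using finK by (simp add: card_PiE)
  have prodf: "(\<Prod>v\<in>K. f v (t v)) = (1/2) ^ card {v\<in>K. t v = i \<and> P v}" for t
  proof -
    have "(\<Prod>v\<in>K. f v (t v)) = (\<Prod>v\<in>K. if t v = i \<and> P v then 1/2 else 1)"
      unfolding f_def by (intro prod.cong) auto
    also have "\<dots> = (\<Prod>v\<in>{v\<in>K. t v = i \<and> P v}. 1/2)"
      using finK by (rule prod.inter_filter[symmetric])
    finally show ?thesis by simp
  qed
  have "real (card B) = (\<Sum>t\<in>B. 1)" by simp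
  also have "\<dots> \<le> (\<Sum>t\<in>B. 2 powr a * (\<Prod>v\<in>K. f v (t v)))"
  proof (rule sum_mono)
    fix t assume "t \<in> B"
    then have lt: "real (card {v\<in>K. t v = i \<and> P v}) < a" unfolding B_def by auto
    have "2 powr a * (1/2::real) ^ card {v\<in>K. t v = i \<and> P v}
          = 2 powr (a - real (card {v\<in>K. t v = i \<and> P v}))"
    proof -
      have e: "(2::real) ^ card {v\<in>K. t v = i \<and> P v} = 2 powr real (card {v\<in>K. t v = i \<and> P v})"
        by (rule powr_realpow[symmetric]) simp
      show ?thesis unfolding power_one_over e powr_diff by simp
    qed
    moreover have "1 \<le> 2 powr (a - real (card {v\<in>K. t v = i \<and> P v}))"
      using lt by (intro ge_one_powr_ge_zero) simp_all
    ultimately show "1 \<le> 2 powr a * (\<Prod>v\<in>K. f v (t v))" using prodf by simp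
  qed
  also have "\<dots> \<le> (\<Sum>t\<in>\<Omega>. 2 powr a * (\<Prod>v\<in>K. f v (t v)))"
    by (rule sum_mono2) (use finO in \<open>auto simp: B_def f_def intro!: prod_nonneg mult_nonneg_nonneg\<close>)
  also have "\<dots> = 2 powr a * (\<Prod>v\<in>K. \<Sum>b\<in>{1..k}. f v b)"
    unfolding \<Omega>_def using finK by (simp add: sum_distrib_left[symmetric] prod_sum_PiE)
  also have "(\<Prod>v\<in>K. \<Sum>b\<in>{1..k}. f v b) = (\<Prod>v\<in>K. real k * (if P v then 1 - 1/(2*real k) else 1))"
  proof (rule prod.cong[OF refl])
    fix v assume "v \<in> K"
    show "(\<Sum>b\<in>{1..k}. f v b) = real k * (if P v then 1 - 1/(2*real k) else 1)"
    proof (cases "P v")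
      case True
      have "(\<Sum>b\<in>{1..k}. f v b) = f v i + (\<Sum>b\<in>{1..k}-{i}. f v b)"
        using i by (simp add: sum.remove)
      also have "\<dots> = 1/2 + real (k - 1)"
        using True i by (simp add: f_def)
      finally have s: "(\<Sum>b\<in>{1..k}. f v b) = real k - 1/2" using k1 by (simp add: of_nat_diff)
      show ?thesis using True k1 unfolding s by (simp add: field_simps)
    next
      case False
      then show ?thesis by (simp add: f_def)
    qed
  qed
  also have "\<dots> = real k ^ card K * (\<Prod>v\<in>K. (if P v then 1 - 1/(2*real k) else 1))"
    by (simp add: prod.distrib)
  also have "(\<Prod>v\<in>K. (if P v then 1 - 1/(2*real k) else 1)) = (1 - 1/(2*real k)) ^ card {v\<in>K. P v}"
    using finK by (subst prod.inter_filter[symmetric]) auto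
  also have "\<dots> \<le> exp (- 1/(2*real k)) ^ card {v\<in>K. P v}"
  proof (rule power_mono)
    show "1 - 1 / (2 * real k) \<le> exp (- 1 / (2 * real k))"
      using exp_minus_ge[of "1/(2*real k)"] by simp
    show "0 \<le> 1 - 1 / (2 * real k)" using k1 by (simp add: field_simps)
  qed
  also have "\<dots> = exp (- real (card {v\<in>K. P v}) / (2 * real k))"
    by (simp add: exp_of_nat_mult[symmetric])
  finally show ?thesis unfolding B_def \<Omega>_def cO[unfolded \<Omega>_def]
    apply (simp add: mult_ac)
    using mono by blast
qed

lemma main_bound:
  fixes V :: "nat set" and E and Vs Ks K and \<kappa> :: real and k :: nat and c C :: real
  assumes c: "c > 0" and C: "C \<ge> 5 * (c + 3)"
    and G: "simple_graph V E"
    and D: "almost_clique_decomposition V E (10 powr (-5)) \<kappa> Vs Ks" and KK: "K \<in> Ks"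
    and k1: "k \<ge> 1" and kb: "real k \<le> real (max_degree V E) / (C * ln (real (card V)))"
  shows "measure_pmf.prob (pmf_of_set (PiE K (\<lambda>_. {1..k})))
         {t. \<forall>i\<in>{1..k}. \<forall>u\<in>K. \<forall>w\<in>K.
              real (card {v \<in> K. t v = i \<and> E u v \<and> E w v}) \<ge> (C / 4) * ln (real (card V))}
       \<ge> 1 - real (card V) powr (- c)"
proof -
  define n where "n = real (card V)"
  define L where "L = ln n"
  define \<Delta> where "\<Delta> = real (max_degree V E)"
  define \<epsilon> :: real where "\<epsilon> = 10 powr (-5)"
  define \<Omega> where "\<Omega> = PiE K (\<lambda>_. {1..k::nat})"
  define a where "a = C / 4 * L"
  define Gd where "Gd = {t. \<forall>i\<in>{1..k}. \<forall>u\<in>K. \<forall>w\<in>K.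
              real (card {v \<in> K. t v = i \<and> E u v \<and> E w v}) \<ge> (C / 4) * ln (real (card V))}"
  define Bad where "Bad i u w = {t \<in> \<Omega>. real (card {v\<in>K. t v = i \<and> (E u v \<and> E w v)}) < a}" for i u w
  have eps: "\<epsilon> = 1/100000" unfolding \<epsilon>_def by (simp add: powr_minus_divide powr_numeral)
  have finV: "finite V" and Vne: "V \<noteq> {}" using G unfolding simple_graph_def by auto
  have KV: "K \<subseteq> V" and Kne: "K \<noteq> {}" and
    Kcard: "real (card K) \<le> (1 + \<epsilon>) * \<Delta>" and
    Kdeg: "\<forall>v\<in>K. real (card (nbhd V E v \<inter> K)) \<ge> (1 - \<epsilon>) * \<Delta>"
    using D KK unfolding almost_clique_decomposition_def Let_def \<epsilon>_def \<Delta>_def by auto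
  have finK: "finite K" using KV finV finite_subset by blast
  have Cpos: "C > 0" using C c by simp
  have kpos: "real k \<ge> 1" using k1 by simp
  have CLpos: "C * L > 0"
  proof (rule ccontr)
    assume "\<not> C * L > 0"
    then have "\<Delta> / (C * L) \<le> 0" unfolding \<Delta>_def by (simp add: divide_nonneg_nonpos)
    then show False using kb kpos unfolding \<Delta>_def L_def n_def by simp
  qed
  then have Lpos: "L > 0" using Cpos by (simp add: zero_less_mult_iff)
  have n1: "n > 1" using Lpos unfolding L_def n_def
    by (metis ln_le_zero_iff not_le of_nat_0_less_iff card_gt_0_iff finV Vne)
  have kCL: "real k * (C * L) \<le> \<Delta>" using kb CLpos unfolding \<Delta>_def L_def n_def
    by (simp add: pos_le_divide_eq)
  have Dn: "\<Delta> \<le> n"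
  proof -
    have "max_degree V E \<le> card V" unfolding max_degree_def
      using finV Vne by (auto intro!: card_mono simp: nbhd_def)
    then show ?thesis unfolding \<Delta>_def n_def by simp
  qed
  have ln2: "ln (2::real) \<ge> 1/2" using ln_le_minus_one[of "1/2::real"] by (simp add: ln_div)
  have "n \<ge> 2" using n1 unfolding n_def by simp
  then have "L \<ge> 1/2" unfolding L_def using ln2 by (smt (verit) ln_le_cancel_iff)
  then have "C * L \<ge> 15 * (1/2)" using C c by (intro mult_mono) auto
  then have CL1: "C * L \<ge> 1" by simp
  have "real k * 1 \<le> real k * (C * L)" using CL1 kpos by (intro mult_left_mono) auto
  then have kn: "real k \<le> n" using kCL Dn by simp
  have Kn: "real (card K) \<le> n" unfolding n_def using card_mono[OF finV KV] by simp
  have sbound: "real (card {v\<in>K. E u v \<and> E w v}) \<ge> (1 - 3*\<epsilon>) * \<Delta>" if "u \<in> K" "w \<in> K" for u w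
  proof -
    have A: "nbhd V E u \<inter> K = {v\<in>K. E u v}" "nbhd V E w \<inter> K = {v\<in>K. E w v}"
      using KV unfolding nbhd_def by auto
    have "card {v\<in>K. E u v} + card {v\<in>K. E w v} = card ({v\<in>K. E u v} \<union> {v\<in>K. E w v}) + card ({v\<in>K. E u v} \<inter> {v\<in>K. E w v})"
      using finK by (intro card_Un_Int) auto
    moreover have "card ({v\<in>K. E u v} \<union> {v\<in>K. E w v}) \<le> card K" using finK by (intro card_mono) auto
    moreover have "{v\<in>K. E u v} \<inter> {v\<in>K. E w v} = {v\<in>K. E u v \<and> E w v}" by auto
    ultimately have "card {v\<in>K. E u v} + card {v\<in>K. E w v} \<le> card K + card {v\<in>K. E u v \<and> E w v}"
      by simp
    then have "real (card {v\<in>K. E u v}) + real (card {v\<in>K. E w v}) \<le> real (card K) + real (card {v\<in>K. E u v \<and> E w v})"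
      by linarith
    moreover have "real (card {v\<in>K. E u v}) \<ge> (1 - \<epsilon>) * \<Delta>" "real (card {v\<in>K. E w v}) \<ge> (1 - \<epsilon>) * \<Delta>"
      using Kdeg that A by auto
    ultimately have "real (card {v\<in>K. E u v \<and> E w v}) \<ge> 2*((1-\<epsilon>)*\<Delta>) - (1+\<epsilon>)*\<Delta>"
      using Kcard by linarith
    moreover have "2*((1-\<epsilon>)*\<Delta>) - (1+\<epsilon>)*\<Delta> = (1-3*\<epsilon>)*\<Delta>" by (simp add: algebra_simps)
    ultimately show ?thesis by simp
  qed
  have Dpos: "\<Delta> \<ge> 0" unfolding \<Delta>_def by simp
  have bad1: "real (card (Bad i u w)) \<le> n powr (- C / 5) * real (card \<Omega>)"
    if i: "i \<in> {1..k}" and u: "u \<in> K" and w: "w \<in> K" for i u w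
  proof -
    define s where "s = real (card {v\<in>K. E u v \<and> E w v})"
    have "real (card (Bad i u w)) \<le> 2 powr a * exp (- s / (2 * real k)) * real (card \<Omega>)"
      unfolding Bad_def \<Omega>_def s_def by (rule bad_count[OF finK k1 i])
    also have "2 powr a * exp (- s / (2 * real k)) \<le> n powr (- C / 5)"
    proof -
      have a0: "a \<ge> 0" unfolding a_def using Cpos Lpos by simp
      have "2 powr a = exp (a * ln 2)" by (simp add: powr_def)
      also have "\<dots> \<le> exp a" using a0 ln_2_less_1 by (simp add: mult_left_le)
      finally have p: "2 powr a \<le> exp a" .
      have e1: "(1-3*\<epsilon>)*\<Delta> \<ge> 97/100*\<Delta>" using eps Dpos by (intro mult_right_mono) auto
      have sD: "s \<ge> 97/100 * \<Delta>" using sbound[OF u w] e1 unfolding s_def by linarith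
      have "97/100 * (real k * (C * L)) \<le> s" using sD kCL by linarith
      then have "97/100 * (real k * (C * L)) / (2 * real k) \<le> s / (2 * real k)"
        using kpos by (intro divide_right_mono) auto
      moreover have "97/100 * (real k * (C * L)) / (2 * real k) = 97/200 * (C * L)" using kpos by (simp add: field_simps)
      ultimately have sk: "s / (2 * real k) \<ge> 97/200 * (C * L)" by simp
      have "2 powr a * exp (- s / (2 * real k)) \<le> exp a * exp (- s / (2 * real k))"
        by (rule mult_right_mono[OF p]) simp
      also have "\<dots> = exp (a + - s / (2 * real k))" by (rule mult_exp_exp)
      also have "\<dots> \<le> exp (- C / 5 * L)"
      proof -
        have "- s / (2 * real k) = - (s / (2 * real k))" by (rule minus_divide_left[symmetric])
        moreover have "a = 1/4 * (C * L)" unfolding a_def by simp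
        moreover have "- C / 5 * L = - (1/5) * (C * L)" by simp
        ultimately have "a + - s / (2 * real k) \<le> - C / 5 * L" using sk CLpos by linarith
        then show ?thesis by simp
      qed
      also have "\<dots> = n powr (- C / 5)" unfolding L_def using n1 by (simp add: powr_def)
      finally show ?thesis .
    qed
    then have "2 powr a * exp (- s / (2 * real k)) * real (card \<Omega>) \<le> n powr (- C / 5) * real (card \<Omega>)"
      by (rule mult_right_mono) simp
    finally show ?thesis .
  qed
  have finO: "finite \<Omega>" unfolding \<Omega>_def using finK by (simp add: finite_PiE)
  have One: "\<Omega> \<noteq> {}" unfolding \<Omega>_def using k1 by (simp add: PiE_eq_empty_iff)
  have cOpos: "real (card \<Omega>) > 0" using finO One by (simp add: card_gt_0_iff)
  have sub: "\<Omega> - Gd \<subseteq> (\<Union>i\<in>{1..k}. \<Union>u\<in>K. \<Union>w\<in>K. Bad i u w)"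
  proof
    fix t assume t: "t \<in> \<Omega> - Gd"
    then obtain i u w where iuw: "i \<in> {1..k}" "u \<in> K" "w \<in> K"
      and lt: "\<not> real (card {v \<in> K. t v = i \<and> E u v \<and> E w v}) \<ge> (C / 4) * ln (real (card V))"
      unfolding Gd_def by blast
    have "t \<in> Bad i u w" using t lt unfolding Bad_def a_def L_def n_def by (simp add: not_le)
    then show "t \<in> (\<Union>i\<in>{1..k}. \<Union>u\<in>K. \<Union>w\<in>K. Bad i u w)" using iuw by blast
  qed
  have "real (card (\<Omega> - Gd)) \<le> real (card (\<Union>i\<in>{1..k}. \<Union>u\<in>K. \<Union>w\<in>K. Bad i u w))"
  proof -
    have finU: "finite (\<Union>i\<in>{1..k}. \<Union>u\<in>K. \<Union>w\<in>K. Bad i u w)"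
      by (rule finite_subset[OF _ finO]) (auto simp: Bad_def)
    show ?thesis using card_mono[OF finU sub] by simp
  qed
  also have "\<dots> \<le> (\<Sum>i\<in>{1..k}. \<Sum>u\<in>K. \<Sum>w\<in>K. real (card (Bad i u w)))"
  proof -
    have "card (\<Union>i\<in>{1..k}. \<Union>u\<in>K. \<Union>w\<in>K. Bad i u w) \<le> (\<Sum>i\<in>{1..k}. card (\<Union>u\<in>K. \<Union>w\<in>K. Bad i u w))"
      by (rule card_UN_le) simp
    also have "\<dots> \<le> (\<Sum>i\<in>{1..k}. \<Sum>u\<in>K. card (\<Union>w\<in>K. Bad i u w))"
      by (intro sum_mono card_UN_le finK)
    also have "\<dots> \<le> (\<Sum>i\<in>{1..k}. \<Sum>u\<in>K. \<Sum>w\<in>K. card (Bad i u w))"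
      by (intro sum_mono card_UN_le finK)
    finally show ?thesis by (simp flip: of_nat_sum)
  qed
  also have "\<dots> \<le> (\<Sum>i\<in>{1..k}. \<Sum>u\<in>K. \<Sum>w\<in>K. n powr (- C / 5) * real (card \<Omega>))"
    by (intro sum_mono bad1) auto
  also have "\<dots> = real k * real (card K) * real (card K) * (n powr (- C / 5) * real (card \<Omega>))"
    by simp
  also have "\<dots> \<le> n * n * n * (n powr (- C / 5) * real (card \<Omega>))"
    using kn Kn by (intro mult_right_mono mult_mono) auto
  finally have b0: "real (card (\<Omega> - Gd)) \<le> n * n * n * (n powr (- C / 5) * real (card \<Omega>))" .
  have "n * n * n * (n powr (- C / 5)) = n powr (3 + - C / 5)"
  proof -
    have "n powr (3 + - C / 5) = n powr 3 * n powr (- C / 5)" by (rule powr_add)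
    moreover have "n powr 3 = n * n * n" using n1 by (simp add: powr_numeral power3_eq_cube)
    ultimately show ?thesis by simp
  qed
  moreover have "n powr (3 + - C / 5) \<le> n powr (- c)"
  proof (rule powr_mono)
    show "3 + - C / 5 \<le> - c" using C by simp
    show "1 \<le> n" using n1 by simp
  qed
  ultimately have "n * n * n * (n powr (- C / 5)) * real (card \<Omega>) \<le> n powr (- c) * real (card \<Omega>)"
    by (intro mult_right_mono) auto
  then have bnd: "real (card (\<Omega> - Gd)) \<le> n powr (- c) * real (card \<Omega>)"
    using b0 by (simp add: mult.assoc)
  have "measure_pmf.prob (pmf_of_set \<Omega>) Gd = real (card (\<Omega> \<inter> Gd)) / real (card \<Omega>)"
    using finO One by (simp add: measure_pmf_of_set)
  also have "real (card (\<Omega> \<inter> Gd)) = real (card \<Omega>) - real (card (\<Omega> - Gd))"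
  proof -
    have "card \<Omega> = card (\<Omega> \<inter> Gd) + card (\<Omega> - Gd)" using finO by (rule card_Int_Diff)
    then show ?thesis by simp
  qed
  also have "(real (card \<Omega>) - real (card (\<Omega> - Gd))) / real (card \<Omega>) = 1 - real (card (\<Omega> - Gd)) / real (card \<Omega>)"
    using cOpos by (simp add: diff_divide_distrib)
  finally have pe: "measure_pmf.prob (pmf_of_set \<Omega>) Gd = 1 - real (card (\<Omega> - Gd)) / real (card \<Omega>)" .
  have "real (card (\<Omega> - Gd)) / real (card \<Omega>) \<le> n powr (- c)"
    using bnd cOpos by (simp add: pos_divide_le_eq)
  then have "measure_pmf.prob (pmf_of_set \<Omega>) Gd \<ge> 1 - n powr (- c)" unfolding pe by simp
  then show ?thesis unfolding \<Omega>_def Gd_def n_def .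
qed

theorem lemma4p1:
  "\<forall>c>0. \<exists>C0>0. \<forall>C\<ge>C0.
     \<forall>(V :: nat set) E Vs Ks K \<kappa> (k :: nat).
       simple_graph V E \<longrightarrow> \<kappa> > 0 \<longrightarrow>
       almost_clique_decomposition V E (10 powr (-5)) \<kappa> Vs Ks \<longrightarrow> K \<in> Ks \<longrightarrow>
       k \<ge> 1 \<longrightarrow> real k \<le> real (max_degree V E) / (C * ln (real (card V))) \<longrightarrow>
       measure_pmf.prob (pmf_of_set (PiE K (\<lambda>_. {1..k})))
         {t. \<forall>i\<in>{1..k}. \<forall>u\<in>K. \<forall>w\<in>K.
              real (card {v \<in> K. t v = i \<and> E u v \<and> E w v}) \<ge> (C / 4) * ln (real (card V))}
       \<ge> 1 - real (card V) powr (- c)"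
  apply (intro allI impI)
  subgoal for c
    apply (rule exI[of _ "5 * (c + 3)"])
    apply (intro conjI allI impI)
     apply simp
    apply (rule main_bound)
           apply assumption+
    done
  done

end
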